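(* Let $T$ be a c.n.u. contraction on $H$ and let $(H_+,H_-,\Gamma_+,\Gamma_-)$ be a boundary quadruple for $A_T^{\perp_s}$ with contractive Weyl function $B$, such that the graph of $T$ equals $\{a\in A_T^{\perp_s}:\Gamma_-a=0\}$. Let $\mathfrak{T}$ be the operator on $\{f_{\hat x}:x\in H\}$ defined by $\mathfrak{T}f_{\hat x}=f_{\widehat{Tx}}$. Then for every $f=f_{\hat x}$, $x\in H$, $$(\mathfrak{T}f)(\lambda)=\lambda f(\lambda)-B(\lambda)f(0_-)\quad\text{for all }\lambda\in\mathbb{D}_+,$$ $$(\mathfrak{T}f)(\lambda)=\frac{f(\lambda)-f(0_-)}{\lambda}\quad\text{for all }\lambda\in\mathbb{D}_-\setminus\{0_-\}.$$
   Context: $H$ is an infinite-dimensional separable complex Hilbert space with inner product $(\cdot,\cdot)_H$; $T\in\mathbb{B}(H)$, $\|T\|\le1$, is completely non-unitary. $\mathbb{K}=\ker(I-T^*T)$. $\mathbb{H}=H\oplus_\perp H$ with $[(x_1,x_2),(y_1,y_2)]=i(x_1,y_1)_H-i(x_2,y_2)_H$; $S^{\perp_s}=\{a:[a,b]=0\ \forall b\in S\}$; $A_T=\{(x,Tx):x\in\mathbb{K}\}$. $\mathbb{D}_\pm$ are two copies of the open unit disc with centers $0_\pm$; for $\lambda\in\mathbb{D}_\pm$, $\bar\lambda$ is regarded as a point of $\mathbb{D}_\mp$. $N_\lambda=\{(x,\lambda x)\}\cap A_T^{\perp_s}$ ($\lambda\in\mathbb{D}_+$), $N_\lambda=\{(\lambda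 x,x)\}\cap A_T^{\perp_s}$ ($\lambda\in\mathbb{D}_-$). Boundary quadruple: Hilbert spaces $H_\pm$, linear $\Gamma_\pm:A_T^{\perp_s}\to H_\pm$ with $(\Gamma_+,\Gamma_-)$ bounded, onto $H_+\oplus_\perp H_-$, kernel $A_T$, and $[a,b]=i(\Gamma_+a,\Gamma_+b)-i(\Gamma_-a,\Gamma_-b)$. Contractive Weyl function $B$: for $\lambda\in\mathbb{D}_+$, $\Gamma_+|_{N_\lambda}$ bijective onto $H_+$, $\Gamma_-a=B(\lambda)\Gamma_+a$ on $N_\lambda$; for $\lambda\in\mathbb{D}_-$, $\Gamma_-|_{N_\lambda}$ bijective onto $H_-$, $\Gamma_+a=B(\bar\lambda)^*\Gamma_-a$ on $N_\lambda$. $\gamma_+(\lambda)z\in N_\lambda$ with $\Gamma_+\gamma_+(\lambda)z=z$ ($\lambda\in\mathbb{D}_+$), $\gamma_-(\lambda)z\in N_\lambda$ with $\Gamma_-\gamma_-(\lambda)z=z$ ($\lambda\in\mathbb{D}_-$); $\varphi_+=pr_1\circ\gamma_+$, $\varphi_-=pr_2\circ\gamma_-$. $E_\lambda=pr_1(N_\lambda)$ or $pr_2(N_\lambda)$ for $\lambda\in\mathbb{D}_+$ or $\mathbb{D}_-$; $F^\dagger_\lambda=E_{\bar\lambda}$, $F_\lambda$ its conjugate-linear dual, pairing $((\cdot,\cdot))$. For $x\in H$, $\hat x(\lambda)\in F_\lambda$ is $\omega\mapsto(x,\omega)_H$ (and $x\mapsto\hat x$ is injective). For $\lambda\in\mathbb{D}_+$,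 $(\varphi_-^\dagger(\lambda)\omega,z)_{H_-}=((\omega,\varphi_-(\bar\lambda)z))$; for $\lambda\in\mathbb{D}_-$, $(\varphi_+^\dagger(\lambda)\omega,z)_{H_+}=((\omega,\varphi_+(\bar\lambda)z))$; $f_s(\lambda)=\varphi_-^\dagger(\lambda)s(\lambda)$ on $\mathbb{D}_+$ and $\varphi_+^\dagger(\lambda)s(\lambda)$ on $\mathbb{D}_-$. *)

theory Defs
  imports "HOL-Analysis.Analysis"
begin

class complex_vector = real_vector +
  fixes scaleC :: "complex \<Rightarrow> 'a \<Rightarrow> 'a"
  assumes scaleC_add_right: "scaleC a (x + y) = scaleC a x + scaleC a y"
    and scaleC_add_left: "scaleC (a + b) x = scaleC a x + scaleC b x"
    and scaleC_scaleC: "scaleC a (scaleC b x) = scaleC (a * b) x"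
    and scaleC_one: "scaleC 1 x = x"
    and scaleR_scaleC: "scaleR r x = scaleC (complex_of_real r) x"

text \<open>Inner product: linear in the first, conjugate-linear in the second argument.\<close>
class complex_inner = complex_vector + real_normed_vector +
  fixes cinner :: "'a \<Rightarrow> 'a \<Rightarrow> complex"
  assumes cinner_commute: "cinner x y = cnj (cinner y x)"
    and cinner_add_left: "cinner (x + y) z = cinner x z + cinner y z"
    and cinner_scaleC_left: "cinner (scaleC r x) y = r * cinner x y"
    and cinner_self_real: "Im (cinner x x) = 0"
    and cinner_self_nonneg: "0 \<le> Re (cinner x x)"
    and cinner_self_eq_zero: "cinner x x = 0 \<longleftrightarrow> x = 0"
    and norm_eq_sqrt_cinner: "norm x = sqrt (Re (cinner x x))"

class chilbert = complex_inner + complete_space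


instantiation complex :: complex_vector
begin
definition scaleC_complex :: "complex \<Rightarrow> complex \<Rightarrow> complex" where "scaleC_complex a x = a * x"
instance by standard (simp_all add: scaleC_complex_def algebra_simps scaleR_conv_of_real)
end

instantiation complex :: complex_inner
begin
definition cinner_complex :: "complex \<Rightarrow> complex \<Rightarrow> complex" where "cinner_complex x y = x * cnj y"
instance by standard (simp_all add: cinner_complex_def scaleC_complex_def algebra_simps cmod_def power2_eq_square)
end

instance complex :: chilbert ..

definition clinear :: "('a::complex_vector \<Rightarrow> 'b::complex_vector) \<Rightarrow> bool" where
  "clinear f \<longleftrightarrow> (\<forall>x y. f (x + y) = f x + f y) \<and> (\<forall>c x. f (scaleC c x) = scaleC c (f x))"

definition cbounded_linear :: "('a::complex_inner \<Rightarrow> 'b::complex_inner) \<Rightarrow> bool" where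
  "cbounded_linear f \<longleftrightarrow> clinear f \<and> (\<exists>K. \<forall>x. norm (f x) \<le> K * norm x)"

text \<open>Hilbert-space adjoint (for bounded operators it exists by the Riesz theorem).\<close>
definition cadjoint :: "('a::chilbert \<Rightarrow> 'b::chilbert) \<Rightarrow> 'b \<Rightarrow> 'a" where
  "cadjoint A y = (THE z. \<forall>x. cinner (A x) y = cinner x z)"

definition csubspace :: "'a::complex_vector set \<Rightarrow> bool" where
  "csubspace M \<longleftrightarrow> 0 \<in> M \<and> (\<forall>x\<in>M. \<forall>y\<in>M. x + y \<in> M) \<and> (\<forall>c. \<forall>x\<in>M. scaleC c x \<in> M)"

definition cspan :: "'a::complex_vector set \<Rightarrow> 'a set" where
  "cspan S = {sum (\<lambda>v. scaleC (c v) v) F | F c. finite F \<and> F \<subseteq> S}"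

definition infinite_dimensional :: "'a::complex_vector itself \<Rightarrow> bool" where
  "infinite_dimensional TYPE('a) \<longleftrightarrow> (\<forall>F::'a set. finite F \<longrightarrow> cspan F \<noteq> UNIV)"

definition separable_type :: "'a::metric_space itself \<Rightarrow> bool" where
  "separable_type TYPE('a) \<longleftrightarrow> (\<exists>D::'a set. countable D \<and> closure D = UNIV)"

definition completely_non_unitary :: "('a::chilbert \<Rightarrow> 'a) \<Rightarrow> bool" where
  "completely_non_unitary T \<longleftrightarrow>
     (\<forall>M. csubspace M \<and> closed M \<and> T ` M \<subseteq> M \<and> cadjoint T ` M \<subseteq> M \<and>
          (\<forall>x\<in>M. cadjoint T (T x) = x \<and> T (cadjoint T x) = x) \<longrightarrow> M = {0})"

definition kform :: "'a::chilbert \<times> 'a \<Rightarrow> 'a \<times> 'a \<Rightarrow> complex" where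
  "kform a b = \<i> * cinner (fst a) (fst b) - \<i> * cinner (snd a) (snd b)"

definition s_orth :: "('a::chilbert \<times> 'a) set \<Rightarrow> ('a \<times> 'a) set" where
  "s_orth S = {a. \<forall>b\<in>S. kform a b = 0}"

definition defect_ker :: "('a::chilbert \<Rightarrow> 'a) \<Rightarrow> 'a set" where
  "defect_ker T = {x. x - cadjoint T (T x) = 0}"

definition A_T :: "('a::chilbert \<Rightarrow> 'a) \<Rightarrow> ('a \<times> 'a) set" where
  "A_T T = {(x, T x) | x. x \<in> defect_ker T}"

text \<open>Points of the disc D_+ resp. D_- are represented by complex numbers of modulus < 1;
  the two copies are kept apart by using separate functions for the two sheets.\<close>
definition N_plus :: "('a::chilbert \<Rightarrow> 'a) \<Rightarrow> complex \<Rightarrow> ('a \<times> 'a) set" where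
  "N_plus T l = {(x, scaleC l x) | x. True} \<inter> s_orth (A_T T)"

definition N_minus :: "('a::chilbert \<Rightarrow> 'a) \<Rightarrow> complex \<Rightarrow> ('a \<times> 'a) set" where
  "N_minus T l = {(scaleC l x, x) | x. True} \<inter> s_orth (A_T T)"

definition boundary_quadruple ::
  "('a::chilbert \<Rightarrow> 'a) \<Rightarrow> ('a \<times> 'a \<Rightarrow> 'p::chilbert) \<Rightarrow> ('a \<times> 'a \<Rightarrow> 'm::chilbert) \<Rightarrow> bool" where
  "boundary_quadruple T Gp Gm \<longleftrightarrow>
     (let L = s_orth (A_T T) in
       (\<forall>a\<in>L. \<forall>b\<in>L. Gp (a + b) = Gp a + Gp b \<and> Gm (a + b) = Gm a + Gm b) \<and>
       (\<forall>c. \<forall>a\<in>L. Gp (scaleC c (fst a), scaleC c (snd a)) = scaleC c (Gp a)) \<and>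
       (\<forall>c. \<forall>a\<in>L. Gm (scaleC c (fst a), scaleC c (snd a)) = scaleC c (Gm a)) \<and>
       (\<exists>K. \<forall>a\<in>L. norm (Gp a, Gm a) \<le> K * norm a) \<and>
       (\<lambda>a. (Gp a, Gm a)) ` L = UNIV \<and>
       {a\<in>L. Gp a = 0 \<and> Gm a = 0} = A_T T \<and>
       (\<forall>a\<in>L. \<forall>b\<in>L. kform a b = \<i> * cinner (Gp a) (Gp b) - \<i> * cinner (Gm a) (Gm b)))"

definition weyl_function ::
  "('a::chilbert \<Rightarrow> 'a) \<Rightarrow> ('a \<times> 'a \<Rightarrow> 'p::chilbert) \<Rightarrow> ('a \<times> 'a \<Rightarrow> 'm::chilbert)
     \<Rightarrow> (complex \<Rightarrow> 'p \<Rightarrow> 'm) \<Rightarrow> bool" where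
  "weyl_function T Gp Gm B \<longleftrightarrow>
     (\<forall>l. cmod l < 1 \<longrightarrow> bij_betw Gp (N_plus T l) UNIV \<and>
                         (\<forall>a\<in>N_plus T l. Gm a = B l (Gp a))) \<and>
     (\<forall>l. cmod l < 1 \<longrightarrow> bij_betw Gm (N_minus T l) UNIV \<and>
                         (\<forall>a\<in>N_minus T l. Gp a = cadjoint (B (cnj l)) (Gm a)))"

definition gamma_plus :: "('a::chilbert \<Rightarrow> 'a) \<Rightarrow> ('a \<times> 'a \<Rightarrow> 'p::chilbert) \<Rightarrow> complex \<Rightarrow> 'p \<Rightarrow> 'a \<times> 'a" where
  "gamma_plus T Gp l z = (THE a. a \<in> N_plus T l \<and> Gp a = z)"

definition gamma_minus :: "('a::chilbert \<Rightarrow> 'a) \<Rightarrow> ('a \<times> 'a \<Rightarrow> 'm::chilbert) \<Rightarrow> complex \<Rightarrow> 'm \<Rightarrow> 'a \<times> 'a" where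
  "gamma_minus T Gm l z = (THE a. a \<in> N_minus T l \<and> Gm a = z)"

definition phi_plus :: "('a::chilbert \<Rightarrow> 'a) \<Rightarrow> ('a \<times> 'a \<Rightarrow> 'p::chilbert) \<Rightarrow> complex \<Rightarrow> 'p \<Rightarrow> 'a" where
  "phi_plus T Gp l z = fst (gamma_plus T Gp l z)"

definition phi_minus :: "('a::chilbert \<Rightarrow> 'a) \<Rightarrow> ('a \<times> 'a \<Rightarrow> 'm::chilbert) \<Rightarrow> complex \<Rightarrow> 'm \<Rightarrow> 'a" where
  "phi_minus T Gm l z = snd (gamma_minus T Gm l z)"

text \<open>Elements of F_l (conjugate-linear functionals on E_{conj l}) are represented by functions
  'a => complex; the pairing ((w, e)) is evaluation w e.\<close>
definition phi_minus_dag :: "('a::chilbert \<Rightarrow> 'a) \<Rightarrow> ('a \<times> 'a \<Rightarrow> 'm::chilbert) \<Rightarrow> complex \<Rightarrow> ('a \<Rightarrow> complex) \<Rightarrow> 'm" where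
  "phi_minus_dag T Gm l w = (THE v. \<forall>z. cinner v z = w (phi_minus T Gm (cnj l) z))"

definition phi_plus_dag :: "('a::chilbert \<Rightarrow> 'a) \<Rightarrow> ('a \<times> 'a \<Rightarrow> 'p::chilbert) \<Rightarrow> complex \<Rightarrow> ('a \<Rightarrow> complex) \<Rightarrow> 'p" where
  "phi_plus_dag T Gp l w = (THE v. \<forall>z. cinner v z = w (phi_plus T Gp (cnj l) z))"

text \<open>x-hat: l |-> (omega |-> (x, omega)_H)  (the same formula on both sheets).\<close>
definition xhat :: "'a::chilbert \<Rightarrow> complex \<Rightarrow> 'a \<Rightarrow> complex" where
  "xhat x = (\<lambda>l \<omega>. cinner x \<omega>)"

definition f_plus :: "('a::chilbert \<Rightarrow> 'a) \<Rightarrow> ('a \<times> 'a \<Rightarrow> 'm::chilbert) \<Rightarrow> (complex \<Rightarrow> 'a \<Rightarrow> complex) \<Rightarrow> complex \<Rightarrow> 'm" where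
  "f_plus T Gm s l = phi_minus_dag T Gm l (s l)"

definition f_minus :: "('a::chilbert \<Rightarrow> 'a) \<Rightarrow> ('a \<times> 'a \<Rightarrow> 'p::chilbert) \<Rightarrow> (complex \<Rightarrow> 'a \<Rightarrow> complex) \<Rightarrow> complex \<Rightarrow> 'p" where
  "f_minus T Gp s l = phi_plus_dag T Gp l (s l)"

end

theory Submission
  imports Defs
begin

lemma cinner_zero_left[simp]: "cinner 0 (z::'a::complex_inner) = 0"
proof -
  have "cinner (0+0) z = cinner 0 z + cinner 0 z" by (rule cinner_add_left)
  thus ?thesis by simp
qed

lemma cinner_zero_right[simp]: "cinner z (0::'a::complex_inner) = 0"
  using cinner_commute[of z 0] by simp

lemma cinner_add_right: "cinner x (y + z) = cinner x y + cinner x (z::'a::complex_inner)"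
  using cinner_commute[of x "y+z"] cinner_commute[of y x] cinner_commute[of z x] by (simp add: cinner_add_left)

lemma cinner_scaleC_right: "cinner x (scaleC c y) = cnj c * cinner x (y::'a::complex_inner)"
  using cinner_commute[of x "scaleC c y"] cinner_commute[of y x] by (simp add: cinner_scaleC_left)

lemma scaleC_minus1: "scaleC (-1) x = - (x::'a::complex_vector)"
  using scaleR_scaleC[of "-1" x] by simp

lemma scaleC_zero_left[simp]: "scaleC 0 x = (0::'a::complex_vector)"
proof -
  have "scaleC (0+0) x = scaleC 0 x + scaleC 0 x" by (rule scaleC_add_left)
  thus ?thesis by simp
qed

lemma scaleC_zero_right[simp]: "scaleC c 0 = (0::'a::complex_vector)"
proof -
  have "scaleC c (0+0) = scaleC c 0 + scaleC c (0::'a)" by (rule scaleC_add_right)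
  thus ?thesis by simp
qed

lemma cinner_minus_left: "cinner (- x) z = - cinner x (z::'a::complex_inner)"
  using cinner_scaleC_left[of "-1" x z] by (simp add: scaleC_minus1)

lemma cinner_diff_left: "cinner (x - y) z = cinner x z - cinner y (z::'a::complex_inner)"
proof -
  have "cinner (x + - y) z = cinner x z + - cinner y z" by (simp only: cinner_add_left cinner_minus_left)
  thus ?thesis by simp
qed

lemma cinner_minus_right: "cinner z (- x) = - cinner z (x::'a::complex_inner)"
  using cinner_commute[of z "-x"] cinner_commute[of x z] by (simp add: cinner_minus_left)

lemma cinner_diff_right: "cinner z (x - y) = cinner z x - cinner z (y::'a::complex_inner)"
proof -
  have "cinner z (x + - y) = cinner z x + - cinner z y" by (simp only: cinner_add_right cinner_minus_right)
  thus ?thesis by simp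
qed

lemma scaleC_diff_right: "scaleC c (x - y) = scaleC c x - scaleC c (y::'a::complex_vector)"
proof -
  have "scaleC c (x - y) + scaleC c y = scaleC c x" by (simp only: scaleC_add_right[symmetric] diff_add_cancel)
  thus ?thesis by (simp add: eq_diff_eq)
qed

lemma cinner_self_norm: "cinner x x = complex_of_real ((norm (x::'a::complex_inner))^2)"
proof -
  have "(norm x)^2 = Re (cinner x x)"
    using norm_eq_sqrt_cinner[of x] cinner_self_nonneg[of x] by simp
  thus ?thesis using cinner_self_real[of x] by (simp add: complex_eq_iff)
qed

lemma cinner_ext:
  assumes "\<forall>z. cinner v z = cinner w (z::'a::complex_inner)"
  shows "v = w"
proof -
  have "cinner (v - w) (v - w) = cinner v (v - w) - cinner w (v - w)" by (rule cinner_diff_left)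
  also have "\<dots> = 0" using assms by simp
  finally have "cinner (v - w) (v - w) = 0" .
  hence "v - w = 0" by (simp only: cinner_self_eq_zero)
  thus ?thesis by simp
qed

lemma the_cinner_eq:
  assumes "\<forall>z. cinner v z = F z"
  shows "(THE v. \<forall>z. cinner v (z::'a::complex_inner) = F z) = v"
proof (rule the_equality)
  show "\<forall>z. cinner v z = F z" by (rule assms)
  fix w assume "\<forall>z. cinner w z = F z"
  thus "w = v" using assms by (intro cinner_ext) simp
qed

lemma proj_comp:
  fixes e m :: "'a::complex_inner"
  assumes "m \<noteq> 0"
  shows "cinner (e - scaleC (cinner e m / cinner m m) m) (e - scaleC (cinner e m / cinner m m) m)
     = cinner e e - cinner e m * cnj (cinner e m) / cinner m m"
proof -
  define c where "c = cinner e m"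
  define n where "n = cinner m m"
  have n0: "n \<noteq> 0" using assms cinner_self_eq_zero n_def by auto
  have nc: "cnj n = n" using cinner_commute[of m m] unfolding n_def by simp
  have me: "cinner m e = cnj c" unfolding c_def by (rule cinner_commute)
  have "cinner (e - scaleC (c / n) m) (e - scaleC (c / n) m)
      = cinner e e - cnj (c/n) * c - (c/n) * cnj c + (c/n) * cnj (c/n) * n"
    by (simp add: cinner_diff_left cinner_diff_right cinner_scaleC_left cinner_scaleC_right
        c_def[symmetric] n_def[symmetric] me algebra_simps)
  also have "\<dots> = cinner e e - c * cnj c / n"
    using n0 nc by (simp add: field_simps)
  finally show ?thesis by (simp add: c_def n_def)
qed

lemma cauchy_schwarz: "cmod (cinner x y) \<le> norm x * norm (y::'a::complex_inner)"
proof (cases "y = 0")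
  case True thus ?thesis by simp
next
  case False
  define c where "c = cinner x y"
  define w where "w = x - scaleC (cinner x y / cinner y y) y"
  have ny: "(norm y)^2 > 0" using False by simp
  have "0 \<le> Re (cinner w w)" by (rule cinner_self_nonneg)
  also have "cinner w w = cinner x x - c * cnj c / cinner y y"
    unfolding w_def c_def by (rule proj_comp[OF False])
  also have "Re (cinner x x - c * cnj c / cinner y y) = (norm x)^2 - (cmod c)^2 / (norm y)^2"
    by (simp add: cinner_self_norm complex_mult_cnj cmod_power2)
  finally have "(cmod c)^2 / (norm y)^2 \<le> (norm x)^2" by simp
  hence "(cmod c)^2 \<le> (norm x)^2 * (norm y)^2" using ny by (simp add: pos_divide_le_eq)
  hence "(cmod c)^2 \<le> (norm x * norm y)^2" by (simp add: power_mult_distrib)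
  thus ?thesis unfolding c_def by (rule power2_le_imp_le) simp
qed

lemma parallelogram:
  fixes a b :: "'a::complex_inner"
  shows "(norm (a+b))^2 + (norm (a-b))^2 = 2*(norm a)^2 + 2*(norm b)^2"
proof -
  have "complex_of_real ((norm (a+b))^2 + (norm (a-b))^2) = cinner (a+b) (a+b) + cinner (a-b) (a-b)"
    by (simp add: cinner_self_norm)
  also have "\<dots> = 2*cinner a a + 2*cinner b b"
    by (simp add: cinner_add_left cinner_add_right cinner_diff_left cinner_diff_right)
  also have "\<dots> = complex_of_real (2*(norm a)^2 + 2*(norm b)^2)"
    by (simp add: cinner_self_norm)
  finally show ?thesis by (simp only: of_real_eq_iff)
qed

lemma scaleR_as_scaleC: "scaleR r x = scaleC (complex_of_real r) (x::'a::complex_vector)"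
  by (rule scaleR_scaleC)

lemma riesz:
  fixes g :: "'a::chilbert \<Rightarrow> complex"
  assumes add: "\<And>x y. g (x + y) = g x + g y"
    and sc: "\<And>c x. g (scaleC c x) = c * g x"
    and bd: "\<And>x. cmod (g x) \<le> K * norm x"
  shows "\<exists>v. \<forall>z. g z = cinner z v"
proof (cases "\<forall>z. g z = 0")
  case True thus ?thesis by (intro exI[of _ 0]) simp
next
  case False
  then obtain z0 where gz0: "g z0 \<noteq> 0" by auto
  have g0: "g 0 = 0" using sc[of 0 0] by simp
  have gdiff: "g (x - y) = g x - g y" for x y
    using add[of "x - y" y] by simp
  have K0: "0 \<le> K"
  proof (rule ccontr)
    assume "\<not> 0 \<le> K"
    hence "K * norm z0 \<le> 0" by (simp add: mult_nonpos_nonneg)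
    hence "cmod (g z0) \<le> 0" using bd[of z0] by linarith
    thus False using gz0 by simp
  qed
  define M where "M = {z. g z = 0}"
  have cont: "continuous_on UNIV g"
  proof (rule lipschitz_on_continuous_on[of K], rule lipschitz_onI)
    fix x y :: 'a
    have "dist (g x) (g y) = cmod (g (x - y))" by (simp add: gdiff dist_norm)
    also have "\<dots> \<le> K * dist x y" using bd[of "x - y"] by (simp add: dist_norm)
    finally show "dist (g x) (g y) \<le> K * dist x y" .
  qed (rule K0)
  have Mcl: "closed M" unfolding M_def by (rule closed_Collect_eq[OF cont continuous_on_const])
  have M0: "0 \<in> M" using g0 M_def by simp
  have Madd: "x + y \<in> M" if "x \<in> M" "y \<in> M" for x y using that add by (simp add: M_def)
  have Msc: "scaleC c x \<in> M" if "x \<in> M" for c x using that sc by (simp add: M_def)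
  have MscR: "scaleR r x \<in> M" if "x \<in> M" for r x using Msc[OF that] by (simp add: scaleR_as_scaleC)
  have Mdiff: "x - y \<in> M" if "x \<in> M" "y \<in> M" for x y using that gdiff by (simp add: M_def)
  define d where "d = infdist z0 M"
  have d0: "0 \<le> d" unfolding d_def by (rule infdist_nonneg)
  have dle: "d \<le> dist z0 m" if "m \<in> M" for m unfolding d_def using that by (rule infdist_le)
  have near: "\<exists>m\<in>M. dist z0 m < d + inverse (real (Suc n))" for n
  proof -
    have Mne: "M \<noteq> {}" using M0 by auto
    have "(INF a\<in>M. dist z0 a) = d" using infdist_notempty[OF Mne, of z0] d_def by simp
    hence "(INF a\<in>M. dist z0 a) < d + inverse (real (Suc n))" by simp
    thus ?thesis using cINF_less_iff[of M "dist z0"] M0 by auto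
  qed
  define ms where "ms n = (SOME m. m \<in> M \<and> dist z0 m < d + inverse (real (Suc n)))" for n
  have msn: "ms n \<in> M \<and> dist z0 (ms n) < d + inverse (real (Suc n))" for n
  proof -
    have "\<exists>m. m \<in> M \<and> dist z0 m < d + inverse (real (Suc n))" using near[of n] by blast
    thus ?thesis unfolding ms_def by (rule someI_ex)
  qed
  have ms: "\<And>n. ms n \<in> M" "\<And>n. dist z0 (ms n) < d + inverse (real (Suc n))"
    using msn by auto
  define eps where "eps n = inverse (real (Suc n))" for n
  have eps_pos: "0 < eps n" for n by (simp add: eps_def)
  have eps_le1: "eps n \<le> 1" for n unfolding eps_def by (simp add: inverse_le_1_iff)
  have eps_mono: "eps n \<le> eps N" if "N \<le> n" for n N using that by (simp add: eps_def field_simps)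
  have est: "(dist (ms n) (ms k))^2 \<le> 2*(2*d+1)*(eps n + eps k)" for n k
  proof -
    define a where "a = z0 - ms n"
    define b where "b = z0 - ms k"
    have mid: "scaleR (1/2) (ms n + ms k) \<in> M" using ms(1) Madd MscR by blast
    have "a + b = scaleR 2 (z0 - scaleR (1/2) (ms n + ms k))"
      unfolding a_def b_def by (simp add: algebra_simps scaleR_2)
    hence nab: "norm (a + b) = 2 * dist z0 (scaleR (1/2) (ms n + ms k))"
      by (simp add: dist_norm)
    have "2 * d \<le> norm (a + b)" using nab dle[OF mid] by simp
    have "(2*d)^2 \<le> (norm (a + b))^2" using \<open>2 * d \<le> norm (a + b)\<close> d0 by (intro power_mono) auto
    hence nab2: "4 * d^2 \<le> (norm (a + b))^2" by (simp add: power_mult_distrib)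
    have amb: "norm (a - b) = dist (ms n) (ms k)" unfolding a_def b_def by (simp add: dist_norm norm_minus_commute)
    have na: "norm a < d + eps n" "d \<le> norm a" using ms(2)[of n] dle[OF ms(1)[of n]]
      by (simp_all add: a_def eps_def dist_norm)
    have nb: "norm b < d + eps k" "d \<le> norm b" using ms(2)[of k] dle[OF ms(1)[of k]]
      by (simp_all add: b_def eps_def dist_norm)
    have "(norm a)^2 \<le> (d + eps n)^2" using na d0 by (intro power_mono) auto
    also have "\<dots> \<le> d^2 + (2*d+1) * eps n" using eps_le1[of n] eps_pos[of n] d0
      by (simp add: power2_eq_square algebra_simps mult_left_le)
    finally have a2: "(norm a)^2 \<le> d^2 + (2*d+1) * eps n" .
    have "(norm b)^2 \<le> (d + eps k)^2" using nb d0 by (intro power_mono) auto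
    also have "\<dots> \<le> d^2 + (2*d+1) * eps k" using eps_le1[of k] eps_pos[of k] d0
      by (simp add: power2_eq_square algebra_simps mult_left_le)
    finally have b2: "(norm b)^2 \<le> d^2 + (2*d+1) * eps k" .
    have "(norm (a - b))^2 = 2*(norm a)^2 + 2*(norm b)^2 - (norm (a+b))^2"
      using parallelogram[of a b] by linarith
    thus ?thesis using a2 b2 nab2 amb by (simp add: algebra_simps)
  qed
  have "Cauchy ms"
  proof (rule metric_CauchyI)
    fix e :: real assume e: "0 < e"
    have "0 < e^2 / (4*(2*d+1))" using e d0 by simp
    then obtain N where N: "inverse (real (Suc N)) < e^2 / (4*(2*d+1))"
      using reals_Archimedean by blast
    show "\<exists>N. \<forall>m\<ge>N. \<forall>n\<ge>N. dist (ms m) (ms n) < e"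
    proof (intro exI allI impI)
      fix m n assume mn: "N \<le> m" "N \<le> n"
      have "(dist (ms m) (ms n))^2 \<le> 2*(2*d+1)*(eps m + eps n)" by (rule est)
      also have "\<dots> \<le> 2*(2*d+1)*(2 * eps N)"
        using eps_mono[OF mn(1)] eps_mono[OF mn(2)] d0 by (intro mult_left_mono) auto
      also have "\<dots> < 2*(2*d+1)*(2 * (e^2 / (4*(2*d+1))))"
        using N d0 by (intro mult_strict_left_mono) (auto simp: eps_def)
      also have "\<dots> = e^2" using d0 by (simp add: field_simps)
      finally have "(dist (ms m) (ms n))^2 < e^2" .
      thus "dist (ms m) (ms n) < e" using e by (simp add: power_less_imp_less_base)
    qed
  qed
  then obtain m0 where m0: "ms \<longlonglongrightarrow> m0" using Cauchy_convergent_iff convergent_def by blast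
  have m0M: "m0 \<in> M" by (rule closed_sequentially[OF Mcl ms(1) m0])
  have "dist z0 m0 \<le> d"
  proof (rule LIMSEQ_le)
    show "(\<lambda>n. dist z0 (ms n)) \<longlonglongrightarrow> dist z0 m0" by (intro tendsto_intros m0)
    show "(\<lambda>n. d + inverse (real (Suc n))) \<longlonglongrightarrow> d"
      using tendsto_add[OF tendsto_const LIMSEQ_inverse_real_of_nat, of d] by simp
    show "\<exists>N. \<forall>n\<ge>N. dist z0 (ms n) \<le> d + inverse (real (Suc n))"
      using ms(2) less_imp_le by blast
  qed
  define e where "e = z0 - m0"
  have emin: "norm e \<le> norm (z0 - m)" if "m \<in> M" for m
    using \<open>dist z0 m0 \<le> d\<close> dle[OF that] by (simp add: e_def dist_norm)
  have orth: "cinner e m = 0" if "m \<in> M" for m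
  proof (cases "m = 0")
    case True thus ?thesis by simp
  next
    case False
    define c where "c = cinner e m"
    define t where "t = c / cinner m m"
    have "m0 + scaleC t m \<in> M" using Madd[OF m0M Msc[OF that]] .
    hence "norm e \<le> norm (e - scaleC t m)" using emin by (simp add: e_def algebra_simps)
    hence "(norm e)^2 \<le> (norm (e - scaleC t m))^2" by (simp add: power_mono)
    also have "\<dots> = Re (cinner (e - scaleC t m) (e - scaleC t m))" by (simp add: cinner_self_norm)
    also have "\<dots> = Re (cinner e e - c * cnj c / cinner m m)"
      using proj_comp[OF False, of e] by (simp add: t_def c_def)
    also have "\<dots> = (norm e)^2 - (cmod c)^2 / (norm m)^2"
      by (simp add: cinner_self_norm complex_mult_cnj cmod_power2)
    finally have "(cmod c)^2 / (norm m)^2 \<le> 0" by simp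
    hence "(cmod c)^2 \<le> 0" using False by (simp add: divide_le_0_iff)
    thus ?thesis unfolding c_def by simp
  qed
  have ge: "g e = g z0" using m0M by (simp add: e_def gdiff M_def)
  have ne: "e \<noteq> 0" using ge gz0 g0 by auto
  have ee: "cinner e e \<noteq> 0" using ne cinner_self_eq_zero by auto
  have eer: "cnj (cinner e e) = cinner e e" using cinner_commute[of e e] by simp
  define v where "v = scaleC (cnj (g e) / cinner e e) e"
  show ?thesis
  proof (intro exI allI)
    fix z
    define w where "w = z - scaleC (g z / g e) e"
    have "g w = 0" using ge gz0 by (simp add: w_def gdiff sc)
    hence "cinner e w = 0" using orth by (simp add: M_def)
    hence "cinner w e = 0" using cinner_commute[of w e] by simp
    hence ze: "cinner z e = g z / g e * cinner e e"
      by (simp add: w_def cinner_diff_left cinner_scaleC_left)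
    show "g z = cinner z v"
      using ee eer ge gz0 by (simp add: v_def cinner_scaleC_right ze)
  qed
qed


lemma L_add: "a \<in> s_orth S \<Longrightarrow> b \<in> s_orth S \<Longrightarrow> a + b \<in> s_orth S"
  by (auto simp: s_orth_def kform_def cinner_add_left algebra_simps)

lemma L_sc: "a \<in> s_orth S \<Longrightarrow> (scaleC c (fst a), scaleC c (snd a)) \<in> s_orth S"
proof -
  assume a: "a \<in> s_orth S"
  show ?thesis unfolding s_orth_def
  proof (intro CollectI ballI)
    fix b assume "b \<in> S"
    hence "kform a b = 0" using a by (simp add: s_orth_def)
    hence "c * kform a b = 0" by simp
    thus "kform (scaleC c (fst a), scaleC c (snd a)) b = 0"
      by (simp add: kform_def cinner_scaleC_left algebra_simps)
  qed
qed

lemma bq_add: "boundary_quadruple T Gp Gm \<Longrightarrow> a \<in> s_orth (A_T T) \<Longrightarrow> b \<in> s_orth (A_T T)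
   \<Longrightarrow> Gp (a + b) = Gp a + Gp b \<and> Gm (a + b) = Gm a + Gm b"
  by (simp add: boundary_quadruple_def Let_def)

lemma bq_sc: "boundary_quadruple T Gp Gm \<Longrightarrow> a \<in> s_orth (A_T T)
   \<Longrightarrow> Gp (scaleC c (fst a), scaleC c (snd a)) = scaleC c (Gp a) \<and>
       Gm (scaleC c (fst a), scaleC c (snd a)) = scaleC c (Gm a)"
  by (simp add: boundary_quadruple_def Let_def)

lemma bq_kf: "boundary_quadruple T Gp Gm \<Longrightarrow> a \<in> s_orth (A_T T) \<Longrightarrow> b \<in> s_orth (A_T T)
   \<Longrightarrow> kform a b = \<i> * cinner (Gp a) (Gp b) - \<i> * cinner (Gm a) (Gm b)"
  by (simp add: boundary_quadruple_def Let_def)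

lemma the_bij:
  assumes "bij_betw f N UNIV" "a \<in> N" "f a = z"
  shows "(THE b. b \<in> N \<and> f b = z) = a"
  using assms by (auto simp: bij_betw_def inj_on_def intro!: the_equality)

lemma the_bij_ex:
  assumes "bij_betw f N UNIV"
  shows "\<exists>a\<in>N. f a = z"
proof -
  have "z \<in> f ` N" using assms by (simp add: bij_betw_def)
  thus ?thesis by blast
qed

lemma N_plus_iff: "a \<in> N_plus T l \<longleftrightarrow> snd a = scaleC l (fst a) \<and> a \<in> s_orth (A_T T)"
  by (cases a) (auto simp: N_plus_def)

lemma N_minus_iff: "a \<in> N_minus T l \<longleftrightarrow> fst a = scaleC l (snd a) \<and> a \<in> s_orth (A_T T)"
  by (cases a) (auto simp: N_minus_def)

lemma gp_facts:
  assumes "weyl_function T Gp Gm B" "cmod l < 1"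
  shows "gamma_plus T Gp l z \<in> N_plus T l \<and> Gp (gamma_plus T Gp l z) = z"
proof -
  have bij: "bij_betw Gp (N_plus T l) UNIV" using assms by (simp add: weyl_function_def)
  obtain a where a: "a \<in> N_plus T l" "Gp a = z" using the_bij_ex[OF bij] by blast
  have "gamma_plus T Gp l z = a" unfolding gamma_plus_def by (rule the_bij[OF bij a])
  thus ?thesis using a by simp
qed

lemma gp_unique:
  assumes "weyl_function T Gp Gm B" "cmod l < 1" "a \<in> N_plus T l" "Gp a = z"
  shows "gamma_plus T Gp l z = a"
proof -
  have bij: "bij_betw Gp (N_plus T l) UNIV" using assms by (simp add: weyl_function_def)
  show ?thesis unfolding gamma_plus_def by (rule the_bij[OF bij assms(3,4)])
qed

lemma gm_facts:
  assumes "weyl_function T Gp Gm B" "cmod l < 1"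
  shows "gamma_minus T Gm l z \<in> N_minus T l \<and> Gm (gamma_minus T Gm l z) = z"
proof -
  have bij: "bij_betw Gm (N_minus T l) UNIV" using assms by (simp add: weyl_function_def)
  obtain a where a: "a \<in> N_minus T l" "Gm a = z" using the_bij_ex[OF bij] by blast
  have "gamma_minus T Gm l z = a" unfolding gamma_minus_def by (rule the_bij[OF bij a])
  thus ?thesis using a by simp
qed

lemma gm_unique:
  assumes "weyl_function T Gp Gm B" "cmod l < 1" "a \<in> N_minus T l" "Gm a = z"
  shows "gamma_minus T Gm l z = a"
proof -
  have bij: "bij_betw Gm (N_minus T l) UNIV" using assms by (simp add: weyl_function_def)
  show ?thesis unfolding gamma_minus_def by (rule the_bij[OF bij assms(3,4)])
qed

lemma gp_all:
  assumes "weyl_function T Gp Gm B" "cmod l < 1"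
  shows "gamma_plus T Gp l z \<in> s_orth (A_T T) \<and> snd (gamma_plus T Gp l z) = scaleC l (fst (gamma_plus T Gp l z))
     \<and> Gp (gamma_plus T Gp l z) = z"
  using gp_facts[OF assms, of z] N_plus_iff[of "gamma_plus T Gp l z" T l] by blast

lemma gm_all:
  assumes "weyl_function T Gp Gm B" "cmod l < 1"
  shows "gamma_minus T Gm l z \<in> s_orth (A_T T) \<and> fst (gamma_minus T Gm l z) = scaleC l (snd (gamma_minus T Gm l z))
     \<and> Gm (gamma_minus T Gm l z) = z"
  using gm_facts[OF assms, of z] N_minus_iff[of "gamma_minus T Gm l z" T l] by blast

lemma bound_aux:
  fixes a b r :: real
  assumes "0 \<le> r" "r < 1" "(1 - r) * a^2 \<le> b^2" "0 \<le> b"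
  shows "a \<le> inverse (sqrt (1 - r)) * b"
proof -
  have s: "sqrt (1 - r) > 0" using assms by simp
  have "(sqrt (1 - r) * a)^2 \<le> b^2" using assms by (simp add: power_mult_distrib)
  hence "sqrt (1 - r) * a \<le> b" by (rule power2_le_imp_le) fact
  thus ?thesis using s by (simp add: field_simps)
qed

lemma riesz_phi:
  fixes \<phi> :: "'m::chilbert \<Rightarrow> 'h::chilbert"
  assumes add: "\<And>z1 z2. \<phi> (z1 + z2) = \<phi> z1 + \<phi> z2"
    and sc: "\<And>c z. \<phi> (scaleC c z) = scaleC c (\<phi> z)"
    and bd: "\<And>z. norm (\<phi> z) \<le> C * norm z"
  shows "\<exists>v. \<forall>z. cinner v z = cinner x (\<phi> z)"
proof -
  have "\<exists>v. \<forall>z. cinner (\<phi> z) x = cinner z v"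
  proof (rule riesz[where K = "C * norm x"])
    show "cinner (\<phi> (a + b)) x = cinner (\<phi> a) x + cinner (\<phi> b) x" for a b
      by (simp add: add cinner_add_left)
    show "cinner (\<phi> (scaleC c a)) x = c * cinner (\<phi> a) x" for c a
      by (simp add: sc cinner_scaleC_left)
    show "cmod (cinner (\<phi> z) x) \<le> C * norm x * norm z" for z
    proof -
      have "cmod (cinner (\<phi> z) x) \<le> norm (\<phi> z) * norm x" by (rule cauchy_schwarz)
      also have "\<dots> \<le> C * norm z * norm x" using bd[of z] by (simp add: mult_right_mono)
      finally show ?thesis by (simp add: algebra_simps)
    qed
  qed
  then obtain v where "\<forall>z. cinner (\<phi> z) x = cinner z v" by blast
  hence "\<forall>z. cinner v z = cinner x (\<phi> z)"
  proof (intro allI)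
    fix z assume h: "\<forall>z. cinner (\<phi> z) x = cinner z v"
    have "cinner v z = cnj (cinner z v)" by (rule cinner_commute)
    also have "\<dots> = cnj (cinner (\<phi> z) x)" using h by simp
    also have "\<dots> = cinner x (\<phi> z)" by (rule cinner_commute[symmetric])
    finally show "cinner v z = cinner x (\<phi> z)" .
  qed
  thus ?thesis by blast
qed

lemma graph_facts:
  assumes "{(x, T x) | x. True} = {a \<in> s_orth (A_T T). Gm a = 0}"
  shows "(y, T y) \<in> s_orth (A_T T) \<and> Gm (y, T y) = 0"
proof -
  have "(y, T y) \<in> {a \<in> s_orth (A_T T). Gm a = 0}" by (subst assms[symmetric]) blast
  thus ?thesis by simp
qed

lemma phi_plus_lin:
  assumes bq: "boundary_quadruple T Gp Gm" and weyl: "weyl_function T Gp Gm B" and l: "cmod l < 1"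
  shows "phi_plus T Gp l (z1 + z2) = phi_plus T Gp l z1 + phi_plus T Gp l z2"
    and "phi_plus T Gp l (scaleC c z1) = scaleC c (phi_plus T Gp l z1)"
proof -
  define a1 where "a1 = gamma_plus T Gp l z1"
  define a2 where "a2 = gamma_plus T Gp l z2"
  have a1: "a1 \<in> s_orth (A_T T)" "snd a1 = scaleC l (fst a1)" "Gp a1 = z1"
    using gp_all[OF weyl l, of z1] unfolding a1_def by blast+
  have a2: "a2 \<in> s_orth (A_T T)" "snd a2 = scaleC l (fst a2)" "Gp a2 = z2"
    using gp_all[OF weyl l, of z2] unfolding a2_def by blast+
  have "a1 + a2 \<in> N_plus T l"
    unfolding N_plus_iff using a1 a2 L_add by (simp add: scaleC_add_right)
  moreover have "Gp (a1 + a2) = z1 + z2" using bq_add[OF bq a1(1) a2(1)] a1 a2 by simp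
  ultimately have "gamma_plus T Gp l (z1 + z2) = a1 + a2" by (rule gp_unique[OF weyl l])
  thus "phi_plus T Gp l (z1 + z2) = phi_plus T Gp l z1 + phi_plus T Gp l z2"
    by (simp add: phi_plus_def a1_def a2_def)
  have "(scaleC c (fst a1), scaleC c (snd a1)) \<in> N_plus T l"
    unfolding N_plus_iff using L_sc[OF a1(1), of c] a1(2) by (simp add: scaleC_scaleC mult.commute)
  moreover have "Gp (scaleC c (fst a1), scaleC c (snd a1)) = scaleC c z1"
    using bq_sc[OF bq a1(1)] a1 by simp
  ultimately have "gamma_plus T Gp l (scaleC c z1) = (scaleC c (fst a1), scaleC c (snd a1))"
    by (rule gp_unique[OF weyl l])
  thus "phi_plus T Gp l (scaleC c z1) = scaleC c (phi_plus T Gp l z1)"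
    by (simp add: phi_plus_def a1_def)
qed

lemma phi_minus_lin:
  assumes bq: "boundary_quadruple T Gp Gm" and weyl: "weyl_function T Gp Gm B" and l: "cmod l < 1"
  shows "phi_minus T Gm l (z1 + z2) = phi_minus T Gm l z1 + phi_minus T Gm l z2"
    and "phi_minus T Gm l (scaleC c z1) = scaleC c (phi_minus T Gm l z1)"
proof -
  define a1 where "a1 = gamma_minus T Gm l z1"
  define a2 where "a2 = gamma_minus T Gm l z2"
  have a1: "a1 \<in> s_orth (A_T T)" "fst a1 = scaleC l (snd a1)" "Gm a1 = z1"
    using gm_all[OF weyl l, of z1] unfolding a1_def by blast+
  have a2: "a2 \<in> s_orth (A_T T)" "fst a2 = scaleC l (snd a2)" "Gm a2 = z2"
    using gm_all[OF weyl l, of z2] unfolding a2_def by blast+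
  have "a1 + a2 \<in> N_minus T l"
    unfolding N_minus_iff using a1 a2 L_add by (simp add: scaleC_add_right)
  moreover have "Gm (a1 + a2) = z1 + z2" using bq_add[OF bq a1(1) a2(1)] a1 a2 by simp
  ultimately have "gamma_minus T Gm l (z1 + z2) = a1 + a2" by (rule gm_unique[OF weyl l])
  thus "phi_minus T Gm l (z1 + z2) = phi_minus T Gm l z1 + phi_minus T Gm l z2"
    by (simp add: phi_minus_def a1_def a2_def)
  have "(scaleC c (fst a1), scaleC c (snd a1)) \<in> N_minus T l"
    unfolding N_minus_iff using L_sc[OF a1(1), of c] a1(2) by (simp add: scaleC_scaleC mult.commute)
  moreover have "Gm (scaleC c (fst a1), scaleC c (snd a1)) = scaleC c z1"
    using bq_sc[OF bq a1(1)] a1 by simp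
  ultimately have "gamma_minus T Gm l (scaleC c z1) = (scaleC c (fst a1), scaleC c (snd a1))"
    by (rule gm_unique[OF weyl l])
  thus "phi_minus T Gm l (scaleC c z1) = scaleC c (phi_minus T Gm l z1)"
    by (simp add: phi_minus_def a1_def)
qed

lemma cinner_scale_self: "cinner (scaleC l u) (scaleC l u) = complex_of_real ((cmod l)^2 * (norm (u::'a::complex_inner))^2)"
proof -
  have "cinner (scaleC l u) (scaleC l u) = l * cnj l * cinner u u"
    by (simp add: cinner_scaleC_left cinner_scaleC_right)
  also have "\<dots> = complex_of_real ((cmod l)^2 * (norm u)^2)"
    by (simp add: cinner_self_norm complex_norm_square[symmetric])
  finally show ?thesis .
qed

lemma i_cancel: "\<i> * a = \<i> * b \<Longrightarrow> a = b"
  by simp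

lemma phi_plus_bd:
  assumes bq: "boundary_quadruple T Gp Gm" and weyl: "weyl_function T Gp Gm B" and l: "cmod l < 1"
  shows "norm (phi_plus T Gp l z) \<le> inverse (sqrt (1 - (cmod l)^2)) * norm z"
proof -
  define a where "a = gamma_plus T Gp l z"
  have a: "a \<in> s_orth (A_T T)" "snd a = scaleC l (fst a)" "Gp a = z"
    using gp_all[OF weyl l, of z] unfolding a_def by blast+
  have "kform a a = \<i> * cinner z z - \<i> * cinner (Gm a) (Gm a)"
    using bq_kf[OF bq a(1) a(1)] a by simp
  moreover have "kform a a = \<i> * cinner (fst a) (fst a) - \<i> * cinner (scaleC l (fst a)) (scaleC l (fst a))"
    using a by (simp add: kform_def)
  ultimately have "\<i> * (cinner (fst a) (fst a) - cinner (scaleC l (fst a)) (scaleC l (fst a)))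
     = \<i> * (cinner z z - cinner (Gm a) (Gm a))" by (simp add: algebra_simps)
  hence "cinner (fst a) (fst a) - cinner (scaleC l (fst a)) (scaleC l (fst a))
     = cinner z z - cinner (Gm a) (Gm a)" by (rule i_cancel)
  hence "complex_of_real ((norm (fst a))^2 - (cmod l)^2 * (norm (fst a))^2)
     = complex_of_real ((norm z)^2 - (norm (Gm a))^2)"
    unfolding cinner_scale_self by (simp add: cinner_self_norm)
  hence "(norm (fst a))^2 - (cmod l)^2 * (norm (fst a))^2 = (norm z)^2 - (norm (Gm a))^2"
    by (simp only: of_real_eq_iff)
  hence "(1 - (cmod l)^2) * (norm (fst a))^2 \<le> (norm z)^2"
    unfolding left_diff_distrib mult_1 using zero_le_power2[of "norm (Gm a)"] by linarith
  moreover have "(cmod l)^2 < 1" using l by (simp add: power_less_one_iff abs_square_less_1)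
  ultimately have "norm (fst a) \<le> inverse (sqrt (1 - (cmod l)^2)) * norm z"
    by (intro bound_aux) auto
  thus ?thesis by (simp add: phi_plus_def a_def)
qed

lemma phi_minus_bd:
  assumes bq: "boundary_quadruple T Gp Gm" and weyl: "weyl_function T Gp Gm B" and l: "cmod l < 1"
  shows "norm (phi_minus T Gm l z) \<le> inverse (sqrt (1 - (cmod l)^2)) * norm z"
proof -
  define a where "a = gamma_minus T Gm l z"
  have a: "a \<in> s_orth (A_T T)" "fst a = scaleC l (snd a)" "Gm a = z"
    using gm_all[OF weyl l, of z] unfolding a_def by blast+
  have "kform a a = \<i> * cinner (Gp a) (Gp a) - \<i> * cinner z z"
    using bq_kf[OF bq a(1) a(1)] a by simp
  moreover have "kform a a = \<i> * cinner (scaleC l (snd a)) (scaleC l (snd a)) - \<i> * cinner (snd a) (snd a)"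
    using a by (simp add: kform_def)
  ultimately have "\<i> * (cinner (snd a) (snd a) - cinner (scaleC l (snd a)) (scaleC l (snd a)))
     = \<i> * (cinner z z - cinner (Gp a) (Gp a))" by (simp add: algebra_simps)
  hence "cinner (snd a) (snd a) - cinner (scaleC l (snd a)) (scaleC l (snd a))
     = cinner z z - cinner (Gp a) (Gp a)" by (rule i_cancel)
  hence "complex_of_real ((norm (snd a))^2 - (cmod l)^2 * (norm (snd a))^2)
     = complex_of_real ((norm z)^2 - (norm (Gp a))^2)"
    unfolding cinner_scale_self by (simp add: cinner_self_norm)
  hence "(norm (snd a))^2 - (cmod l)^2 * (norm (snd a))^2 = (norm z)^2 - (norm (Gp a))^2"
    by (simp only: of_real_eq_iff)
  hence "(1 - (cmod l)^2) * (norm (snd a))^2 \<le> (norm z)^2"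
    unfolding left_diff_distrib mult_1 using zero_le_power2[of "norm (Gp a)"] by linarith
  moreover have "(cmod l)^2 < 1" using l by (simp add: power_less_one_iff abs_square_less_1)
  ultimately have "norm (snd a) \<le> inverse (sqrt (1 - (cmod l)^2)) * norm z"
    by (intro bound_aux) auto
  thus ?thesis by (simp add: phi_minus_def a_def)
qed

lemma key_minus:
  assumes bq: "boundary_quadruple T Gp Gm" and weyl: "weyl_function T Gp Gm B" and l: "cmod l < 1"
    and graph: "{(x, T x) | x. True} = {a \<in> s_orth (A_T T). Gm a = 0}"
  shows "cinner y (phi_plus T Gp l z) - cnj l * cinner (T y) (phi_plus T Gp l z) = cinner (Gp (y, T y)) z"
proof -
  define a where "a = gamma_plus T Gp l z"
  have a: "a \<in> s_orth (A_T T)" "snd a = scaleC l (fst a)" "Gp a = z"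
    using gp_all[OF weyl l, of z] unfolding a_def by blast+
  have b: "(y, T y) \<in> s_orth (A_T T)" "Gm (y, T y) = 0" using graph_facts[OF graph] by auto
  have k1: "kform (y, T y) a = \<i> * cinner (Gp (y, T y)) z - \<i> * cinner 0 (Gm a)"
    using bq_kf[OF bq b(1) a(1)] unfolding a(3) b(2) .
  have k2: "kform (y, T y) a = \<i> * cinner y (fst a) - \<i> * cinner (T y) (scaleC l (fst a))"
    unfolding kform_def fst_conv snd_conv a(2) ..
  have "\<i> * (cinner y (fst a) - cnj l * cinner (T y) (fst a)) = \<i> * cinner (Gp (y, T y)) z"
    using k1 k2 by (simp add: cinner_scaleC_right right_diff_distrib)
  hence "cinner y (fst a) - cnj l * cinner (T y) (fst a) = cinner (Gp (y, T y)) z"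
    by (rule i_cancel)
  thus ?thesis unfolding phi_plus_def a_def .
qed

lemma key_plus:
  assumes bq: "boundary_quadruple T Gp Gm" and weyl: "weyl_function T Gp Gm B" and l: "cmod l < 1"
    and graph: "{(x, T x) | x. True} = {a \<in> s_orth (A_T T). Gm a = 0}"
  shows "cinner (T y) (phi_minus T Gm (cnj l) z) = l * cinner y (phi_minus T Gm (cnj l) z) - cinner (B l (Gp (y, T y))) z"
proof -
  have l': "cmod (cnj l) < 1" using l by simp
  define a where "a = gamma_minus T Gm (cnj l) z"
  have a: "a \<in> s_orth (A_T T)" "fst a = scaleC (cnj l) (snd a)" "Gm a = z"
    using gm_all[OF weyl l', of z] unfolding a_def by blast+
  define p where "p = Gp (y, T y)"
  have b: "(y, T y) \<in> s_orth (A_T T)" "Gm (y, T y) = 0" using graph_facts[OF graph] by auto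
  have k1: "kform (y, T y) a = \<i> * cinner p (Gp a) - \<i> * cinner 0 (Gm a)"
    using bq_kf[OF bq b(1) a(1)] unfolding p_def b(2) .
  have k2: "kform (y, T y) a = \<i> * cinner y (scaleC (cnj l) (snd a)) - \<i> * cinner (T y) (snd a)"
    unfolding kform_def fst_conv snd_conv a(2) ..
  have "\<i> * (l * cinner y (snd a) - cinner (T y) (snd a)) = \<i> * cinner p (Gp a)"
    using k1 k2 by (simp add: cinner_scaleC_right right_diff_distrib)
  hence e1: "l * cinner y (snd a) - cinner (T y) (snd a) = cinner p (Gp a)"
    by (rule i_cancel)
  define b' where "b' = gamma_plus T Gp l p"
  have b'N: "b' \<in> N_plus T l" using gp_facts[OF weyl l, of p] unfolding b'_def by blast
  have b': "b' \<in> s_orth (A_T T)" "snd b' = scaleC l (fst b')" "Gp b' = p"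
    using gp_all[OF weyl l, of p] unfolding b'_def by blast+
  have wl: "\<forall>a\<in>N_plus T l. Gm a = B l (Gp a)" using weyl l unfolding weyl_function_def by blast
  have "Gm b' = B l (Gp b')" using wl b'N by blast
  hence gmb: "Gm b' = B l p" using b'(3) by simp
  have k3: "kform b' a = \<i> * cinner (Gp b') (Gp a) - \<i> * cinner (Gm b') (Gm a)"
    using bq_kf[OF bq b'(1) a(1)] .
  have k4: "kform b' a = \<i> * cinner (fst b') (scaleC (cnj l) (snd a)) - \<i> * cinner (scaleC l (fst b')) (snd a)"
    unfolding kform_def a(2) b'(2) ..
  have "kform b' a = 0" using k4 by (simp add: cinner_scaleC_right cinner_scaleC_left)
  hence "\<i> * cinner p (Gp a) = \<i> * cinner (B l p) z" using k3 gmb b'(3) a(3) by simp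
  hence "cinner p (Gp a) = cinner (B l p) z" by (rule i_cancel)
  hence "l * cinner y (snd a) - cinner (T y) (snd a) = cinner (B l p) z" using e1 by simp
  hence "cinner (T y) (snd a) = l * cinner y (snd a) - cinner (B l p) z" by (simp add: algebra_simps)
  thus ?thesis unfolding phi_minus_def a_def p_def .
qed

lemma f_minus_0:
  assumes bq: "boundary_quadruple T Gp Gm" and weyl: "weyl_function T Gp Gm B"
    and graph: "{(x, T x) | x. True} = {a \<in> s_orth (A_T T). Gm a = 0}"
  shows "f_minus T Gp (xhat x) 0 = Gp (x, T x)"
proof -
  have "\<forall>z. cinner (Gp (x, T x)) z = cinner x (phi_plus T Gp (cnj 0) z)"
    using key_minus[OF bq weyl _ graph, of 0 x] by simp
  thus ?thesis unfolding f_minus_def phi_plus_dag_def xhat_def by (rule the_cinner_eq)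
qed

theorem corollary4p18:
  fixes T :: "'h::chilbert \<Rightarrow> 'h"
    and Gp :: "'h \<times> 'h \<Rightarrow> 'p::chilbert"
    and Gm :: "'h \<times> 'h \<Rightarrow> 'm::chilbert"
    and B :: "complex \<Rightarrow> 'p \<Rightarrow> 'm"
  assumes H_inf: "infinite_dimensional TYPE('h)"
    and H_sep: "separable_type TYPE('h)"
    and T_bl: "cbounded_linear T"
    and T_contr: "\<forall>x. norm (T x) \<le> norm x"
    and T_cnu: "completely_non_unitary T"
    and bq: "boundary_quadruple T Gp Gm"
    and weyl: "weyl_function T Gp Gm B"
    and graph: "{(x, T x) | x. True} = {a \<in> s_orth (A_T T). Gm a = 0}"
  shows "(\<forall>x l. cmod l < 1 \<longrightarrow>
            f_plus T Gm (xhat (T x)) l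
              = scaleC l (f_plus T Gm (xhat x) l) - B l (f_minus T Gp (xhat x) 0))
       \<and> (\<forall>x l. cmod l < 1 \<and> l \<noteq> 0 \<longrightarrow>
            f_minus T Gp (xhat (T x)) l
              = scaleC (1 / l) (f_minus T Gp (xhat x) l - f_minus T Gp (xhat x) 0))"
proof (intro conjI allI impI)
  fix x and l :: complex
  assume l: "cmod l < 1"
  have l': "cmod (cnj l) < 1" using l by simp
  have "\<exists>v. \<forall>z. cinner v z = cinner x (phi_minus T Gm (cnj l) z)"
    by (rule riesz_phi[where C = "inverse (sqrt (1 - (cmod (cnj l))^2))"])
      (rule phi_minus_lin(1)[OF bq weyl l'], rule phi_minus_lin(2)[OF bq weyl l'], rule phi_minus_bd[OF bq weyl l'])
  then obtain v where v: "\<forall>z. cinner v z = cinner x (phi_minus T Gm (cnj l) z)" by blast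
  define p where "p = Gp (x, T x)"
  have f0: "f_minus T Gp (xhat x) 0 = p" unfolding p_def by (rule f_minus_0[OF bq weyl graph])
  have fx: "f_plus T Gm (xhat x) l = v"
    unfolding f_plus_def phi_minus_dag_def xhat_def using v by (rule the_cinner_eq)
  have "\<forall>z. cinner (scaleC l v - B l p) z = cinner (T x) (phi_minus T Gm (cnj l) z)"
  proof
    fix z
    show "cinner (scaleC l v - B l p) z = cinner (T x) (phi_minus T Gm (cnj l) z)"
      using v key_plus[OF bq weyl l graph, of x z] by (simp add: cinner_diff_left cinner_scaleC_left p_def)
  qed
  hence "f_plus T Gm (xhat (T x)) l = scaleC l v - B l p"
    unfolding f_plus_def phi_minus_dag_def xhat_def by (rule the_cinner_eq)
  thus "f_plus T Gm (xhat (T x)) l = scaleC l (f_plus T Gm (xhat x) l) - B l (f_minus T Gp (xhat x) 0)"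
    using fx f0 by simp
next
  fix x and l :: complex
  assume l0: "cmod l < 1 \<and> l \<noteq> 0"
  hence l: "cmod l < 1" and ln: "l \<noteq> 0" by auto
  have l': "cmod (cnj l) < 1" using l by simp
  have "\<exists>v. \<forall>z. cinner v z = cinner x (phi_plus T Gp (cnj l) z)"
    by (rule riesz_phi[where C = "inverse (sqrt (1 - (cmod (cnj l))^2))"])
      (rule phi_plus_lin(1)[OF bq weyl l'], rule phi_plus_lin(2)[OF bq weyl l'], rule phi_plus_bd[OF bq weyl l'])
  then obtain v where v: "\<forall>z. cinner v z = cinner x (phi_plus T Gp (cnj l) z)" by blast
  define p where "p = Gp (x, T x)"
  have f0: "f_minus T Gp (xhat x) 0 = p" unfolding p_def by (rule f_minus_0[OF bq weyl graph])
  have fx: "f_minus T Gp (xhat x) l = v"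
    unfolding f_minus_def phi_plus_dag_def xhat_def using v by (rule the_cinner_eq)
  have "\<forall>z. cinner (scaleC (1 / l) (v - p)) z = cinner (T x) (phi_plus T Gp (cnj l) z)"
  proof
    fix z
    have k: "cinner x (phi_plus T Gp (cnj l) z) - l * cinner (T x) (phi_plus T Gp (cnj l) z) = cinner p z"
      using key_minus[OF bq weyl l' graph, of x z] by (simp add: p_def)
    have "cinner (scaleC (1 / l) (v - p)) z = (cinner x (phi_plus T Gp (cnj l) z) - cinner p z) / l"
      using v by (simp add: cinner_diff_left cinner_scaleC_left)
    also have "\<dots> = cinner (T x) (phi_plus T Gp (cnj l) z)"
      using k ln by (simp add: field_simps)
    finally show "cinner (scaleC (1 / l) (v - p)) z = cinner (T x) (phi_plus T Gp (cnj l) z)" .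
  qed
  hence "f_minus T Gp (xhat (T x)) l = scaleC (1 / l) (v - p)"
    unfolding f_minus_def phi_plus_dag_def xhat_def by (rule the_cinner_eq)
  thus "f_minus T Gp (xhat (T x)) l = scaleC (1 / l) (f_minus T Gp (xhat x) l - f_minus T Gp (xhat x) 0)"
    using fx f0 by simp
qed

end
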